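(* Assume the setting in the context (in particular Assumption (A)). Let $\rho>0$, $z_0\in V_f(\rho)$ and $\epsilon>0$, run Algorithm $\mathcal{A}_*$ from $z_0$ with accuracy $\epsilon$, and suppose $j_{out}\geq2$. Suppose that there exist an integer $T\in\{2,\dots,j_{out}\}$ and an integer $\ell\in\{0,\dots,j_{out}-T\}$ such that $m_{\ell+1}>\frac{1}{\sqrt{15}}m_{\ell+1+T}$. Then: (i) $s_j\in\left(0,\frac{\sqrt{15}}{4}\right]$ for all $j\in\{\ell+2,\dots,\ell+T\}$; (ii) $\sum_{j=\ell+2}^{\ell+T}\ln\left(\max\{1,(4s_j)^4\}\right)<4\ln15$; (iii) $\sum_{j=\ell+2}^{\ell+T}\ln\left(\frac{1}{s_j^2}-1\right)\leq\ln\left(1+\frac{f(z_0)-f^*}{\epsilon}\right)$; (iv) $T<5+\frac{1}{\ln15}\ln\left(1+\frac{f(z_0)-f^*}{\epsilon}\right)$.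
   Context: Let $f:\mathbb{R}^n\to(-\infty,\infty]$ be a proper closed convex function such that the problem $f^*=\min_{x\in\mathbb{R}^n}f(x)$ is solvable. Let $\Omega_f=\{x: f(x)=f^*\}$, fix a norm $\|\cdot\|$ on $\mathbb{R}^n$ with dual norm $\|y\|_*=\sup\{y^Tz:\|z\|\leq 1\}$, and for $x\in\mathbb{R}^n$ let $\bar x=\arg\min_{z\in\Omega_f}\|x-z\|$. For $\rho\geq0$ let $V_f(\rho)=\{x: f(x)-f^*\leq\rho\}$. Let $\mathcal{A}$ be an iterative algorithm: for $x_0\in\mathrm{dom} f$ and integer $k\geq1$, $\mathcal{A}(x_0,k)$ denotes its $k$-th iterate started from $x_0$ (and $\mathcal{A}(x_0,0)=x_0$). Assumption (A): (i) for every $\rho>0$ there is $\mu_\rho>0$ with $f(x_0)-f^*\geq\frac{\mu_\rho}{2}\|x_0-\bar x_0\|^2$ for all $x_0\in V_f(\rho)$; (ii) there exist $a_f>0$, $L_f>0$ and $g:\mathbb{R}^n\to\mathbb{R}^n$ with $g(x)=0\iff x\in\Omega_f$ such that for every $x_0\in\mathrm{dom} f$: $f(\mathcal{A}(x_0,1))\leq f(x_0)-\frac{1}{2L_f}\|g(x_0)\|_*^2$ and $f(\mathcal{A}(x_0,k))-f^*\leq\frac{a_f}{(k+1)^2}\|x_0-\bar x_0\|^2$ for all $k\geq1$; (iii) $\bar n_\rho:=\max\{\frac12,\sqrt{2a_f/\mu_\rho}\}$. Procedure $\mathcal{A}_d(r,n)$ (input $r\in\mathrm{dom} f$, $n\in\mathbb{R}$):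 set $x_0=r$, $k=0$. Repeat: $k\gets k+1$; set $x_k=\mathcal{A}(x_0,k)$ if $f(\mathcal{A}(x_0,k))\leq f(x_{k-1})$, and $x_k=x_{k-1}$ otherwise; $\ell=\lfloor k/2\rfloor$; until $k\geq n$ and $f(x_\ell)-f(x_k)\leq\frac13(f(x_0)-f(x_\ell))$. Output $z=x_k$, $m=k$. Algorithm $\mathcal{A}_*(z_0)$ (input $z_0\in\mathrm{dom} f$, $\epsilon>0$): set $m_0=1$, $m_{-1}=1$, $j=-1$. Repeat: $j\gets j+1$; $s_j=\sqrt{\frac{f(z_{j-1})-f(z_j)}{f(z_{j-2})-f(z_j)}}$ if $j\geq2$ and $s_j=0$ otherwise; $n_j=\max\{m_j,4s_jm_{j-1}\}$; $[z_{j+1},m_{j+1}]=\mathcal{A}_d(z_j,n_j)$; until $f(z_j)-f(z_{j+1})\leq\epsilon$. Output $z_{out}=z_{j+1}$, $j_{out}=j$. *)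

theory Defs
  imports "HOL-Analysis.Analysis"
begin

(* An extended-valued function f : R^n -> (-inf,inf] is represented by its
   domain D = dom f together with its (real) values on D; values of f outside D
   are irrelevant (they play the role of +infinity). *)

definition is_norm :: "('a::euclidean_space \<Rightarrow> real) \<Rightarrow> bool" where
  "is_norm N \<longleftrightarrow> (\<forall>x. N x = 0 \<longleftrightarrow> x = 0) \<and> (\<forall>x y. N (x + y) \<le> N x + N y)
     \<and> (\<forall>c x. N (c *\<^sub>R x) = \<bar>c\<bar> * N x)"

definition dual_norm :: "('a::euclidean_space \<Rightarrow> real) \<Rightarrow> 'a \<Rightarrow> real" where
  "dual_norm N y = Sup {y \<bullet> z | z. N z \<le> 1}"

definition proper_closed_convex :: "('a::euclidean_space \<Rightarrow> real) \<Rightarrow> 'a set \<Rightarrow> bool" where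
  "proper_closed_convex f D \<longleftrightarrow> D \<noteq> {} \<and> convex D \<and> convex_on D f
     \<and> (\<forall>c. closed {x \<in> D. f x \<le> c})"

definition fstar :: "('a \<Rightarrow> real) \<Rightarrow> 'a set \<Rightarrow> real" where
  "fstar f D = Inf (f ` D)"

definition Omega :: "('a \<Rightarrow> real) \<Rightarrow> 'a set \<Rightarrow> 'a set" where
  "Omega f D = {x \<in> D. f x = fstar f D}"

definition distN :: "('a::euclidean_space \<Rightarrow> real) \<Rightarrow> 'a set \<Rightarrow> 'a \<Rightarrow> real" where
  "distN N S x = Inf ((\<lambda>z. N (x - z)) ` S)"

definition Vf :: "('a \<Rightarrow> real) \<Rightarrow> 'a set \<Rightarrow> real \<Rightarrow> 'a set" where
  "Vf f D \<rho> = {x \<in> D. f x - fstar f D \<le> \<rho>}"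

(* Assumption (A) (i) and (ii); (iii) is only a definition of \<bar>n_rho and is not needed *)
definition assumption_A ::
  "('a::euclidean_space \<Rightarrow> real) \<Rightarrow> ('a \<Rightarrow> real) \<Rightarrow> 'a set \<Rightarrow> ('a \<Rightarrow> nat \<Rightarrow> 'a) \<Rightarrow> bool" where
  "assumption_A N f D Alg \<longleftrightarrow>
     (\<forall>\<rho>>0. \<exists>\<mu>>0. \<forall>x0 \<in> Vf f D \<rho>.
         f x0 - fstar f D \<ge> \<mu> / 2 * (distN N (Omega f D) x0)\<^sup>2)
   \<and> (\<exists>a>0. \<exists>L>0. \<exists>g::'a \<Rightarrow> 'a. (\<forall>x. g x = 0 \<longleftrightarrow> x \<in> Omega f D) \<and>
        (\<forall>x0 \<in> D. f (Alg x0 1) \<le> f x0 - 1 / (2 * L) * (dual_norm N (g x0))\<^sup>2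
           \<and> (\<forall>k\<ge>1. f (Alg x0 k) - fstar f D \<le> a / (real k + 1)\<^sup>2 * (distN N (Omega f D) x0)\<^sup>2)))"

primrec Ad_x :: "('a \<Rightarrow> real) \<Rightarrow> ('a \<Rightarrow> nat \<Rightarrow> 'a) \<Rightarrow> 'a \<Rightarrow> nat \<Rightarrow> 'a" where
  "Ad_x f Alg r 0 = r"
| "Ad_x f Alg r (Suc k) =
     (if f (Alg r (Suc k)) \<le> f (Ad_x f Alg r k) then Alg r (Suc k) else Ad_x f Alg r k)"

definition Ad_m :: "('a \<Rightarrow> real) \<Rightarrow> ('a \<Rightarrow> nat \<Rightarrow> 'a) \<Rightarrow> 'a \<Rightarrow> real \<Rightarrow> nat" where
  "Ad_m f Alg r n = (LEAST k. 1 \<le> k \<and> real k \<ge> n \<and>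
      f (Ad_x f Alg r (k div 2)) - f (Ad_x f Alg r k)
        \<le> 1/3 * (f (Ad_x f Alg r 0) - f (Ad_x f Alg r (k div 2))))"

definition Ad :: "('a \<Rightarrow> real) \<Rightarrow> ('a \<Rightarrow> nat \<Rightarrow> 'a) \<Rightarrow> 'a \<Rightarrow> real \<Rightarrow> 'a \<times> nat" where
  "Ad f Alg r n = (let m = Ad_m f Alg r n in (Ad_x f Alg r m, m))"

(* (z_j, m_j) produced by algorithm A_* started at z0 (ignoring the stopping test):
   m_0 = 1, m_{-1} = 1, s_0 = s_1 = 0,
   s_j = sqrt((f z_{j-1} - f z_j)/(f z_{j-2} - f z_j)) for j >= 2,
   n_j = max{m_j, 4 s_j m_{j-1}},  [z_{j+1}, m_{j+1}] = A_d(z_j, n_j). *)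
fun Astar_run :: "('a \<Rightarrow> real) \<Rightarrow> ('a \<Rightarrow> nat \<Rightarrow> 'a) \<Rightarrow> 'a \<Rightarrow> nat \<Rightarrow> 'a \<times> nat" where
  "Astar_run f Alg z0 0 = (z0, 1)"
| "Astar_run f Alg z0 (Suc 0) = Ad f Alg z0 (max (real 1) (4 * 0 * real 1))"
| "Astar_run f Alg z0 (Suc (Suc 0)) =
     (let (z1, m1) = Astar_run f Alg z0 (Suc 0) in
      Ad f Alg z1 (max (real m1) (4 * 0 * real 1)))"
| "Astar_run f Alg z0 (Suc (Suc (Suc j))) =
     (let (zj, mj) = Astar_run f Alg z0 (Suc (Suc j));
          (zj1, mj1) = Astar_run f Alg z0 (Suc j);
          zj2 = fst (Astar_run f Alg z0 j);
          sj = sqrt ((f zj1 - f zj) / (f zj2 - f zj))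
      in Ad f Alg zj (max (real mj) (4 * sj * real mj1)))"

definition Astar_z :: "('a \<Rightarrow> real) \<Rightarrow> ('a \<Rightarrow> nat \<Rightarrow> 'a) \<Rightarrow> 'a \<Rightarrow> nat \<Rightarrow> 'a" where
  "Astar_z f Alg z0 j = fst (Astar_run f Alg z0 j)"

definition Astar_m :: "('a \<Rightarrow> real) \<Rightarrow> ('a \<Rightarrow> nat \<Rightarrow> 'a) \<Rightarrow> 'a \<Rightarrow> nat \<Rightarrow> nat" where
  "Astar_m f Alg z0 j = snd (Astar_run f Alg z0 j)"

definition Astar_s :: "('a \<Rightarrow> real) \<Rightarrow> ('a \<Rightarrow> nat \<Rightarrow> 'a) \<Rightarrow> 'a \<Rightarrow> nat \<Rightarrow> real" where
  "Astar_s f Alg z0 j = (if j \<ge> 2 then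
      sqrt ((f (Astar_z f Alg z0 (j - 1)) - f (Astar_z f Alg z0 j))
          / (f (Astar_z f Alg z0 (j - 2)) - f (Astar_z f Alg z0 j)))
     else 0)"

definition is_jout :: "('a \<Rightarrow> real) \<Rightarrow> ('a \<Rightarrow> nat \<Rightarrow> 'a) \<Rightarrow> 'a \<Rightarrow> real \<Rightarrow> nat \<Rightarrow> bool" where
  "is_jout f Alg z0 \<epsilon> J \<longleftrightarrow>
     f (Astar_z f Alg z0 J) - f (Astar_z f Alg z0 (Suc J)) \<le> \<epsilon> \<and>
     (\<forall>j<J. f (Astar_z f Alg z0 j) - f (Astar_z f Alg z0 (Suc j)) > \<epsilon>)"

end

theory Submission
  imports Defs
begin

lemma Ad_x_D:
  assumes "r \<in> D" "\<forall>x\<in>D. \<forall>k\<ge>1. Alg x k \<in> D"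
  shows "Ad_x f Alg r k \<in> D"
  using assms by (induction k) auto

lemma Ad_x_step: "f (Ad_x f Alg r (Suc k)) \<le> f (Ad_x f Alg r k)"
  by auto

lemma Ad_x_anti:
  assumes "i \<le> k" shows "f (Ad_x f Alg r k) \<le> f (Ad_x f Alg r i)"
  using assms
proof (induction k rule: dec_induct)
  case base then show ?case by simp
next
  case (step k) then show ?case using Ad_x_step[of f Alg r k] by linarith
qed

lemma Ad_x_Alg:
  assumes "1 \<le> k" shows "f (Ad_x f Alg r k) \<le> f (Alg r k)"
proof -
  obtain k' where "k = Suc k'" using assms by (cases k) auto
  then show ?thesis by auto
qed

lemma Ad_m_exists:
  fixes fs :: real
  assumes rD: "r \<in> D" and AD: "\<forall>x\<in>D. \<forall>k\<ge>1. Alg x k \<in> D"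
    and low: "\<forall>y\<in>D. fs \<le> f y"
    and a: "a > 0"
    and bnd: "\<forall>k\<ge>1. f (Alg r k) - fs \<le> a / (real k + 1)\<^sup>2 * d\<^sup>2"
  shows "\<exists>k. 1 \<le> k \<and> real k \<ge> n \<and>
      f (Ad_x f Alg r (k div 2)) - f (Ad_x f Alg r k)
        \<le> 1/3 * (f (Ad_x f Alg r 0) - f (Ad_x f Alg r (k div 2)))"
proof -
  have inD: "\<And>k. Ad_x f Alg r k \<in> D" using Ad_x_D[OF rD AD] .
  have r0: "Ad_x f Alg r 0 = r" by simp
  show ?thesis
  proof (cases "f r = fs")
    case True
    obtain M :: nat where M: "max n 1 \<le> real M" using real_arch_simple by blast
    have e1: "f (Ad_x f Alg r M) = fs" for M
      using inD[of M] low Ad_x_anti[of 0 M f Alg r] True by force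
    show ?thesis
      apply (rule exI[of _ M]) using M e1 True by auto
  next
    case False
    have fr: "f r > fs" using low rD False by force
    define \<delta> where "\<delta> = f r - fs"
    have dpos: "\<delta> > 0" using fr \<delta>_def by simp
    obtain M :: nat where M: "max (max n 1) (4 * a * d\<^sup>2 / \<delta>) \<le> real M" using real_arch_simple by blast
    have M1: "1 \<le> M" using M by auto
    have "4 * a * d\<^sup>2 / \<delta> \<le> real M" using M by auto
    also have "... \<le> (real M + 1)\<^sup>2" using mult_nonneg_nonneg[of "real M" "real M"] by (simp add: power2_eq_square algebra_simps)
    finally have "4 * a * d\<^sup>2 \<le> (real M + 1)\<^sup>2 * \<delta>" using dpos by (simp add: divide_le_eq mult.commute)
    hence q: "a / (real M + 1)\<^sup>2 * d\<^sup>2 \<le> \<delta> / 4"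
      by (simp add: divide_le_eq field_simps)
    have "f (Ad_x f Alg r M) - fs \<le> \<delta> / 4"
      using Ad_x_Alg[OF M1, of f Alg r] bnd[rule_format, OF M1] q by linarith
    moreover have "f (Ad_x f Alg r (2*M)) \<ge> fs" using inD low by blast
    moreover have "f (Ad_x f Alg r (2*M)) \<le> f (Ad_x f Alg r M)" using Ad_x_anti[of M "2*M" f Alg r] by simp
    ultimately show ?thesis
      apply (intro exI[of _ "2*M"]) using M M1 \<delta>_def by auto
  qed
qed

lemma Ad_m_props:
  assumes "\<exists>k. 1 \<le> k \<and> real k \<ge> n \<and>
      f (Ad_x f Alg r (k div 2)) - f (Ad_x f Alg r k)
        \<le> 1/3 * (f (Ad_x f Alg r 0) - f (Ad_x f Alg r (k div 2)))"
  shows "1 \<le> Ad_m f Alg r n \<and> n \<le> real (Ad_m f Alg r n)"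
  using LeastI_ex[OF assms] unfolding Ad_m_def by blast



lemma Astar_run_Suc:
  "Astar_run f Alg z0 (Suc j) = Ad f Alg (Astar_z f Alg z0 j)
     (max (real (Astar_m f Alg z0 j)) (4 * Astar_s f Alg z0 j * real (Astar_m f Alg z0 (j - 1))))"
proof -
  consider "j = 0" | "j = 1" | j' where "j = Suc (Suc j')" by (metis One_nat_def not0_implies_Suc)
  then show ?thesis
  proof cases
    case 1 then show ?thesis by (simp add: Astar_z_def Astar_m_def Astar_s_def)
  next
    case 2 then show ?thesis by (simp add: Astar_z_def Astar_m_def Astar_s_def case_prod_beta)
  next
    case 3 then show ?thesis by (simp add: Astar_z_def Astar_m_def Astar_s_def case_prod_beta Let_def)
  qed
qed

lemma tele:
  fixes G :: "nat \<Rightarrow> real"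
  shows "(\<Sum>j = c..c+t. G j - G (j - 1)) = G (c + t) - G (c - 1)"
proof (induction t)
  case 0 then show ?case by simp
next
  case (Suc t)
  have "(\<Sum>j = c..c + Suc t. G j - G (j - 1)) = (\<Sum>j = c..c+t. G j - G (j - 1)) + (G (c + Suc t) - G (c + t))"
    by (simp add: sum.cl_ivl_Suc)
  then show ?case using Suc by simp
qed


lemma term_ineq_x:
  fixes x :: real
  assumes x0: "0 < x" and x1: "x \<le> 15/16"
  shows "15 \<le> (1 / x - 1) * max 1 (256 * x\<^sup>2)"
proof (cases "x \<le> 1/16")
  case True
  have "256 * x\<^sup>2 \<le> 256 * (1/16)\<^sup>2" using True x0 by (intro mult_left_mono power_mono) auto
  hence m: "max 1 (256 * x\<^sup>2) = 1" by (simp add: power2_eq_square)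
  have "16 \<le> 1 / x" using True x0 by (simp add: le_divide_eq)
  then show ?thesis using m by simp
next
  case False
  have "256 * x\<^sup>2 = 16 * x * (16 * x)" by (simp add: power2_eq_square)
  also have "... \<ge> 1 * 1" using False by (intro mult_mono) auto
  finally have m: "max 1 (256 * x\<^sup>2) = 256 * x\<^sup>2" by simp
  have e: "(1 / x - 1) * (256 * x\<^sup>2) = 256 * x * (1 - x)"
    using x0 by (simp add: power2_eq_square field_simps)
  have "0 \<le> (16 * x - 1) * (15 - 16 * x)" using False x1 by (intro mult_nonneg_nonneg) auto
  hence "15 \<le> 256 * x * (1 - x)" by (simp add: algebra_simps)
  then show ?thesis using m e by simp
qed

lemma term_ineq:
  fixes s :: real
  assumes "0 < s" "s \<le> sqrt 15 / 4"
  shows "ln 15 \<le> ln (1 / s\<^sup>2 - 1) + ln (max 1 ((4 * s) ^ 4))"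
proof -
  have "s\<^sup>2 \<le> (sqrt 15 / 4)\<^sup>2" using assms by (intro power_mono) auto
  also have "... = 15/16" by (simp add: power_divide)
  finally have s2: "s\<^sup>2 \<le> 15/16" .
  have sp: "s\<^sup>2 > 0" using assms by simp
  have e: "(4 * s) ^ 4 = 256 * (s\<^sup>2)\<^sup>2" by (simp add: power_mult_distrib flip: power_mult)
  have "1 / s\<^sup>2 \<ge> 16/15" using s2 sp by (simp add: le_divide_eq)
  hence A: "1 / s\<^sup>2 - 1 > 0" by linarith
  have B: "max 1 ((4 * s) ^ 4) > 0" by simp
  have "15 \<le> (1 / s\<^sup>2 - 1) * max 1 ((4 * s) ^ 4)"
    unfolding e by (rule term_ineq_x[OF sp s2])
  hence "ln 15 \<le> ln ((1 / s\<^sup>2 - 1) * max 1 ((4 * s) ^ 4))" by simp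
  also have "... = ln (1 / s\<^sup>2 - 1) + ln (max 1 ((4 * s) ^ 4))" by (rule ln_mult_pos[OF A B])
  finally show ?thesis .
qed


theorem lemma3:
  fixes N :: "'a::euclidean_space \<Rightarrow> real"
    and f :: "'a \<Rightarrow> real" and D :: "'a set"
    and Alg :: "'a \<Rightarrow> nat \<Rightarrow> 'a"
    and \<rho> \<epsilon> :: real and z0 :: 'a and jout T l :: nat
  assumes "is_norm N"
    and "proper_closed_convex f D"
    and "\<exists>x\<in>D. \<forall>y\<in>D. f x \<le> f y"
    and "\<forall>x. Alg x 0 = x"
    and "\<forall>x\<in>D. \<forall>k\<ge>1. Alg x k \<in> D"
    and "assumption_A N f D Alg"
    and "\<rho> > 0" and "z0 \<in> Vf f D \<rho>" and "\<epsilon> > 0"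
    and "is_jout f Alg z0 \<epsilon> jout" and "jout \<ge> 2"
    and "2 \<le> T" and "T \<le> jout" and "l \<le> jout - T"
    and "real (Astar_m f Alg z0 (l + 1)) > 1 / sqrt 15 * real (Astar_m f Alg z0 (l + 1 + T))"
  shows "(\<forall>j \<in> {l+2..l+T}. 0 < Astar_s f Alg z0 j \<and> Astar_s f Alg z0 j \<le> sqrt 15 / 4)
    \<and> (\<Sum>j = l+2..l+T. ln (max 1 ((4 * Astar_s f Alg z0 j) ^ 4))) < 4 * ln 15
    \<and> (\<Sum>j = l+2..l+T. ln (1 / (Astar_s f Alg z0 j)\<^sup>2 - 1))
        \<le> ln (1 + (f z0 - fstar f D) / \<epsilon>)
    \<and> real T < 5 + 1 / ln 15 * ln (1 + (f z0 - fstar f D) / \<epsilon>)"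
proof -
  obtain xs where xsD: "xs \<in> D" and xsmin: "\<forall>y\<in>D. f xs \<le> f y" using assms(3) by blast
  have fs_eq: "fstar f D = f xs" unfolding fstar_def
    by (rule cInf_eq_minimum) (use xsD xsmin in auto)
  have low: "\<forall>y\<in>D. fstar f D \<le> f y" using fs_eq xsmin by simp
  obtain a where a: "a > 0" and bnd: "\<forall>x0\<in>D. \<forall>k\<ge>1. f (Alg x0 k) - fstar f D
      \<le> a / (real k + 1)\<^sup>2 * (distN N (Omega f D) x0)\<^sup>2"
    using assms(6) unfolding assumption_A_def by blast
  have AD: "\<forall>x\<in>D. \<forall>k\<ge>1. Alg x k \<in> D" using assms(5) .
  have z0D: "z0 \<in> D" using assms(8) unfolding Vf_def by simp
  define z where "z = Astar_z f Alg z0"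
  define m where "m = Astar_m f Alg z0"
  define s where "s = Astar_s f Alg z0"
  define nn where "nn j = max (real (m j)) (4 * s j * real (m (j - 1)))" for j
  have run: "Astar_run f Alg z0 (Suc j) = Ad f Alg (z j) (nn j)" for j
    using Astar_run_Suc[of f Alg z0 j] unfolding z_def m_def s_def nn_def by simp
  have mS: "m (Suc j) = Ad_m f Alg (z j) (nn j)" for j
    using arg_cong[OF run[of j], of snd] by (simp add: m_def Astar_m_def Ad_def Let_def)
  have zS: "z (Suc j) = Ad_x f Alg (z j) (m (Suc j))" for j
    using arg_cong[OF run[of j], of fst] mS[of j] by (simp add: z_def Astar_z_def Ad_def Let_def)
  have z0': "z 0 = z0" by (simp add: z_def Astar_z_def)
  have zD: "z j \<in> D" for j
  proof (induction j)
    case 0 then show ?case using z0D z0' by simp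
  next
    case (Suc j) then show ?case using zS[of j] Ad_x_D[OF _ AD] by simp
  qed
  have mprop: "1 \<le> m (Suc j) \<and> nn j \<le> real (m (Suc j))" for j
  proof -
    have "\<exists>k. 1 \<le> k \<and> real k \<ge> nn j \<and>
      f (Ad_x f Alg (z j) (k div 2)) - f (Ad_x f Alg (z j) k)
        \<le> 1/3 * (f (Ad_x f Alg (z j) 0) - f (Ad_x f Alg (z j) (k div 2)))"
      using Ad_m_exists[OF zD AD low a] bnd zD by blast
    from Ad_m_props[OF this] show ?thesis using mS[of j] by simp
  qed
  have m0: "m 0 = 1" by (simp add: m_def Astar_m_def)
  have mpos: "1 \<le> m j" for j using m0 mprop by (cases j) auto
  have mstep: "m j \<le> m (Suc j)" for j using mprop[of j] unfolding nn_def by simp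
  have mmono: "i \<le> j \<Longrightarrow> m i \<le> m j" for i j by (rule lift_Suc_mono_le[of m, OF mstep])
  have mrel: "4 * s j * real (m (j-1)) \<le> real (m (Suc j))" for j
    using mprop[of j] unfolding nn_def by simp
  have sdef: "s j = sqrt ((f (z (j-1)) - f (z j)) / (f (z (j-2)) - f (z j)))" if "2 \<le> j" for j
    using that by (simp add: s_def Astar_s_def z_def)
  have dec: "f (z j) - f (z (Suc j)) > \<epsilon>" if "j < jout" for j
    using assms(10) that unfolding is_jout_def z_def by blast
  have fz0: "j \<le> jout \<Longrightarrow> f (z j) \<le> f z0" for j
  proof (induction j)
    case 0 then show ?case using z0' by simp
  next
    case (Suc j) then show ?case using dec[of j] assms(9) by simp
  qed
  have lT: "l + T \<le> jout" using assms(13,14) by simp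
  define M where "M = real (m (l+1+T))"
  define m1 where "m1 = real (m (l+1))"
  have m1pos: "m1 \<ge> 1" using mpos m1_def by simp
  have sq15: "sqrt 15 > 0" by simp
  have Mlt: "M < sqrt 15 * m1" using assms(15) sq15 unfolding M_def m1_def m_def
    by (simp add: field_simps)
  have rng: "2 \<le> j \<and> j \<le> jout \<and> l + 2 \<le> j \<and> j \<le> l + T" if "j \<in> {l+2..l+T}" for j
    using that lT by auto
  define d where "d i = f (z i) - f (z (Suc i))" for i
  have dpos: "d i > \<epsilon>" if "i < jout" for i using dec[OF that] d_def by simp
  have s_form: "s j = sqrt (d (j-1) / (d (j-2) + d (j-1)))" if "2 \<le> j" for j
  proof -
    have a1: "Suc (j-1) = j" "Suc (j-2) = j - 1" using that by auto
    show ?thesis using sdef[OF that] unfolding d_def a1 by (simp add: algebra_simps)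
  qed
  have spos: "0 < s j" if "j \<in> {l+2..l+T}" for j
  proof -
    have i1: "j - 1 < jout" "j - 2 < jout" using rng[OF that] by auto
    have "d (j-1) > 0" "d (j-2) > 0" using dpos[OF i1(1)] dpos[OF i1(2)] assms(9) by linarith+
    then show ?thesis using s_form rng[OF that] by simp
  qed
  have sbound: "4 * s j * m1 < sqrt 15 * m1" if "j \<in> {l+2..l+T}" for j
  proof -
    have "m (l+1) \<le> m (j-1)" "m (Suc j) \<le> m (l+1+T)" using mmono rng[OF that] by auto
    hence "m1 \<le> real (m (j-1))" "real (m (Suc j)) \<le> M" unfolding m1_def M_def by auto
    hence "4 * s j * m1 \<le> 4 * s j * real (m (j-1))" using spos[OF that]
      by (intro mult_left_mono) auto
    also have "... \<le> M" using mrel[of j] \<open>real (m (Suc j)) \<le> M\<close> by linarith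
    finally show ?thesis using Mlt by linarith
  qed
  have partI: "\<forall>j \<in> {l+2..l+T}. 0 < s j \<and> s j \<le> sqrt 15 / 4"
  proof
    fix j assume j: "j \<in> {l+2..l+T}"
    have "4 * s j < sqrt 15" using sbound[OF j] m1pos by simp
    then show "0 < s j \<and> s j \<le> sqrt 15 / 4" using spos[OF j] by simp
  qed
  define g where "g i = ln (real (m i))" for i
  define G where "G j = g (Suc j) + g j" for j
  have t2: "ln (max 1 ((4 * s j) ^ 4)) \<le> 4 * (G j - G (j - 1))" if "j \<in> {l+2..l+T}" for j
  proof -
    have j1: "Suc (j - 1) = j" using rng[OF that] by auto
    have mp: "real (m (j-1)) > 0" using mpos[of "j-1"] by simp
    have "max 1 (4 * s j) * real (m (j-1)) \<le> real (m (Suc j))"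
      using mrel[of j] mmono[of "j-1" "Suc j"] by (auto simp: max_def)
    hence le: "max 1 (4 * s j) \<le> real (m (Suc j)) / real (m (j-1))" using mp by (simp add: le_divide_eq)
    have eq: "max 1 ((4 * s j) ^ 4) = (max 1 (4 * s j)) ^ 4"
    proof (cases "1 \<le> 4 * s j")
      case True
      hence "1 \<le> (4 * s j) ^ 4" by (rule one_le_power)
      then show ?thesis using True by simp
    next
      case False
      hence "(4 * s j) ^ 4 \<le> 1" using spos[OF that] by (intro power_le_one) auto
      then show ?thesis using False by simp
    qed
    have "ln (max 1 ((4 * s j) ^ 4)) = 4 * ln (max 1 (4 * s j))" unfolding eq
      by (simp add: ln_realpow)
    also have "... \<le> 4 * ln (real (m (Suc j)) / real (m (j-1)))" using le by simp
    also have "... = 4 * (g (Suc j) - g (j - 1))" using mp mpos[of "Suc j"] unfolding g_def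
      by (simp add: ln_divide_pos)
    also have "... = 4 * (G j - G (j - 1))" unfolding G_def j1 by simp
    finally show ?thesis .
  qed
  have rng_eq: "{l+2..l+T} = {l+2..(l+2)+(T-2)}" using assms(12) by simp
  have e2: "l + 2 + (T - 2) = l + T" "l + 2 - 1 = l + 1" using assms(12) by simp_all
  have sum2a: "(\<Sum>j = l+2..l+T. ln (max 1 ((4 * s j) ^ 4))) \<le> 4 * (G (l+T) - G (l+1))"
  proof -
    have "(\<Sum>j = l+2..l+T. ln (max 1 ((4 * s j) ^ 4))) \<le> (\<Sum>j = l+2..l+T. 4 * (G j - G (j - 1)))"
      by (rule sum_mono) (rule t2)
    also have "... = 4 * (\<Sum>j = l+2..(l+2)+(T-2). G j - G (j - 1))" unfolding rng_eq
      by (simp add: sum_distrib_left)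
    also have "... = 4 * (G (l+T) - G (l+1))" unfolding tele unfolding e2 by simp
    finally show ?thesis .
  qed
  have gmono: "g i \<le> g j" if "i \<le> j" for i j
  proof -
    have "real (m i) \<le> real (m j)" "real (m i) > 0" using mmono[OF that] mpos[of i] by auto
    then show ?thesis unfolding g_def by simp
  qed
  have Gb: "G (l+T) - G (l+1) \<le> 2 * (g (l+1+T) - g (l+1))"
    using gmono[of "l+T" "Suc (l+T)"] gmono[of "l+1" "Suc (l+1)"] unfolding G_def by (simp add: add.commute)
  have "M\<^sup>2 < (sqrt 15 * m1)\<^sup>2" using Mlt mpos unfolding M_def
    by (intro power_strict_mono) auto
  hence "M\<^sup>2 < 15 * m1\<^sup>2" by (simp add: power_mult_distrib)
  moreover have Mpos: "M \<ge> 1" unfolding M_def using mpos[of "l+1+T"] by simp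
  ultimately have "ln (M\<^sup>2) < ln (15 * m1\<^sup>2)" by (subst ln_less_cancel_iff) auto
  hence "2 * ln M < ln 15 + 2 * ln m1" using Mpos m1pos
    by (simp add: ln_mult_pos ln_realpow)
  hence gb2: "2 * (g (l+1+T) - g (l+1)) < ln 15" unfolding g_def M_def m1_def by simp
  have partII: "(\<Sum>j = l+2..l+T. ln (max 1 ((4 * s j) ^ 4))) < 4 * ln 15"
  proof -
    have "4 * (G (l+T) - G (l+1)) < 4 * ln 15" using Gb gb2 by (smt (verit))
    with sum2a show ?thesis by (rule le_less_trans)
  qed
  define h where "h i = ln (d i)" for i
  define H where "H j = - h (j - 1)" for j
  have t3: "ln (1 / (s j)\<^sup>2 - 1) = H j - H (j - 1)" if "j \<in> {l+2..l+T}" for j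
  proof -
    have i1: "j - 1 < jout" "j - 2 < jout" "2 \<le> j" using rng[OF that] by auto
    have p1: "d (j-1) > 0" "d (j-2) > 0" using dpos[OF i1(1)] dpos[OF i1(2)] assms(9) by linarith+
    have sq: "(s j)\<^sup>2 = d (j-1) / (d (j-2) + d (j-1))" using s_form[OF i1(3)] p1 by simp
    have "1 / (s j)\<^sup>2 - 1 = d (j-2) / d (j-1)" unfolding sq using p1 by (simp add: field_simps)
    hence "ln (1 / (s j)\<^sup>2 - 1) = h (j-2) - h (j-1)" using p1 unfolding h_def by (simp add: ln_divide_pos)
    also have "... = H j - H (j - 1)"
    proof -
      have "j - 1 - 1 = j - 2" by simp
      then show ?thesis unfolding H_def by simp
    qed
    finally show ?thesis .
  qed
  have sum3a: "(\<Sum>j = l+2..l+T. ln (1 / (s j)\<^sup>2 - 1)) = h l - h (l + T - 1)"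
  proof -
    have "(\<Sum>j = l+2..l+T. ln (1 / (s j)\<^sup>2 - 1)) = (\<Sum>j = l+2..l+T. H j - H (j - 1))"
      by (rule sum.cong) (auto simp: t3)
    also have "... = (\<Sum>j = l+2..(l+2)+(T-2). H j - H (j - 1))" unfolding rng_eq ..
    also have "... = H (l+T) - H (l+1)" unfolding tele unfolding e2 by simp
    also have "... = h l - h (l + T - 1)" unfolding H_def by simp
    finally show ?thesis .
  qed
  have lj: "l < jout" "l + T - 1 < jout" using lT assms(12) by auto
  have dl: "d l \<le> f z0 - fstar f D" using fz0[of l] lj low zD[of "Suc l"] unfolding d_def by force
  have dl0: "d l > 0" using dpos[OF lj(1)] assms(9) by linarith
  have R0: "f z0 - fstar f D > 0" using dl dl0 by linarith
  have "h l \<le> ln (f z0 - fstar f D)" unfolding h_def using dl dl0 by simp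
  moreover have "h (l + T - 1) > ln \<epsilon>" unfolding h_def using dpos[OF lj(2)] assms(9) by simp
  ultimately have "(\<Sum>j = l+2..l+T. ln (1 / (s j)\<^sup>2 - 1)) < ln (f z0 - fstar f D) - ln \<epsilon>"
    using sum3a by linarith
  also have "... = ln ((f z0 - fstar f D) / \<epsilon>)" using R0 assms(9) by (simp add: ln_divide_pos)
  also have "... \<le> ln (1 + (f z0 - fstar f D) / \<epsilon>)"
  proof -
    have "(f z0 - fstar f D) / \<epsilon> > 0" using R0 assms(9) by simp
    then show ?thesis by (subst ln_le_cancel_iff) auto
  qed
  finally have partIII: "(\<Sum>j = l+2..l+T. ln (1 / (s j)\<^sup>2 - 1)) < ln (1 + (f z0 - fstar f D) / \<epsilon>)" .
  define Lg where "Lg = ln (1 + (f z0 - fstar f D) / \<epsilon>)"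
  have "(\<Sum>j = l+2..l+T. ln 15) \<le> (\<Sum>j = l+2..l+T. ln (1 / (s j)\<^sup>2 - 1) + ln (max 1 ((4 * s j) ^ 4)))"
    by (rule sum_mono) (use partI term_ineq in blast)
  also have "... = (\<Sum>j = l+2..l+T. ln (1 / (s j)\<^sup>2 - 1)) + (\<Sum>j = l+2..l+T. ln (max 1 ((4 * s j) ^ 4)))"
    by (rule sum.distrib)
  also have "... < Lg + 4 * ln 15" using partII partIII unfolding Lg_def by linarith
  finally have "(real T - 1) * ln 15 < Lg + 4 * ln 15" using assms(12) by (simp add: of_nat_diff)
  hence "real T * ln 15 < (5 + 1 / ln 15 * Lg) * ln 15" by (simp add: algebra_simps)
  hence partIV: "real T < 5 + 1 / ln 15 * Lg" by (simp add: mult_less_cancel_right)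
  show ?thesis using partI partII partIII partIV unfolding s_def Lg_def by simp
qed

end
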